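(* Let $X$ be a topological space in which every open set is a union of countably many clopen sets. If $X$ is a QN space, then $X$ is a wQN$_*$ space.
   Context: Functions $f_n:X\to\mathbb{R}$ converge quasi-normally to $0$ if there are positive reals $\epsilon_n\to0$ such that for each $x\in X$, $|f_n(x)|<\epsilon_n$ for all but finitely many $n$. $X$ is a QN space if every sequence of continuous real-valued functions on $X$ converging pointwise to $0$ converges to $0$ quasi-normally. $X$ is wQN$_*$ if every sequence of lower semi-continuous real-valued functions on $X$ converging pointwise to $0$ has a subsequence converging to $0$ quasi-normally. *)

theory Defs
  imports "HOL-Analysis.Analysis"
begin

definition qn_converges :: "'a topology \<Rightarrow> (nat \<Rightarrow> 'a \<Rightarrow> real) \<Rightarrow> bool" where
  "qn_converges X f \<longleftrightarrow>
     (\<exists>\<epsilon>::nat \<Rightarrow> real. (\<forall>n. \<epsilon> n > 0) \<and> \<epsilon> \<longlonglongrightarrow> 0 \<and>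
        (\<forall>x\<in>topspace X. \<forall>\<^sub>F n in sequentially. \<bar>f n x\<bar> < \<epsilon> n))"

definition pointwise_to_zero :: "'a topology \<Rightarrow> (nat \<Rightarrow> 'a \<Rightarrow> real) \<Rightarrow> bool" where
  "pointwise_to_zero X f \<longleftrightarrow> (\<forall>x\<in>topspace X. (\<lambda>n. f n x) \<longlonglongrightarrow> 0)"

definition lower_semicontinuous_on :: "'a topology \<Rightarrow> ('a \<Rightarrow> real) \<Rightarrow> bool" where
  "lower_semicontinuous_on X g \<longleftrightarrow> (\<forall>a::real. openin X {x \<in> topspace X. a < g x})"

definition QN_space :: "'a topology \<Rightarrow> bool" where
  "QN_space X \<longleftrightarrow>
     (\<forall>f::nat \<Rightarrow> 'a \<Rightarrow> real. (\<forall>n. continuous_map X euclideanreal (f n)) \<and> pointwise_to_zero X f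
        \<longrightarrow> qn_converges X f)"

definition wQN_star_space :: "'a topology \<Rightarrow> bool" where
  "wQN_star_space X \<longleftrightarrow>
     (\<forall>f::nat \<Rightarrow> 'a \<Rightarrow> real. (\<forall>n. lower_semicontinuous_on X (f n)) \<and> pointwise_to_zero X f
        \<longrightarrow> (\<exists>s. strict_mono s \<and> qn_converges X (\<lambda>n. f (s n))))"

end

theory Submission
  imports Defs "HOL-Library.Nat_Bijection"
begin

definition HH :: "(nat \<Rightarrow> 'a set) \<Rightarrow> 'a \<Rightarrow> real" where
  "HH A x = (if \<exists>n. x \<in> A n then 1 / real (Suc (LEAST n. x \<in> A n)) else 0)"

lemma HH_ge: "x \<in> A n \<Longrightarrow> 1 / real (Suc n) \<le> HH A x"
proof -
  assume a: "x \<in> A n"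
  have "(LEAST n. x \<in> A n) \<le> n" using a by (rule Least_le)
  then show ?thesis using a unfolding HH_def
    by (auto simp: divide_simps)
qed

lemma HH_nonneg: "0 \<le> HH A x"
  by (simp add: HH_def)

lemma HH_pos_witness:
  assumes "0 < a" "a \<le> HH A x"
  shows "\<exists>n. x \<in> A n \<and> a \<le> 1 / real (Suc n)"
proof -
  have ex: "\<exists>n. x \<in> A n" using assms unfolding HH_def by (auto split: if_splits)
  have "x \<in> A (LEAST n. x \<in> A n)" using ex by (rule LeastI_ex)
  moreover have "a \<le> 1 / real (Suc (LEAST n. x \<in> A n))" using assms ex unfolding HH_def by simp
  ultimately show ?thesis by blast
qed

lemma HH_gt_witness:
  assumes "0 \<le> a" "a < HH A x"
  shows "\<exists>n. x \<in> A n \<and> a < 1 / real (Suc n)"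
proof -
  have ex: "\<exists>n. x \<in> A n" using assms unfolding HH_def by (auto split: if_splits)
  have "x \<in> A (LEAST n. x \<in> A n)" using ex by (rule LeastI_ex)
  moreover have "a < 1 / real (Suc (LEAST n. x \<in> A n))" using assms ex unfolding HH_def by simp
  ultimately show ?thesis by blast
qed

lemma HH_small:
  assumes "\<forall>i\<le>N. x \<notin> A i"
  shows "HH A x \<le> 1 / real (Suc (Suc N))"
proof (cases "\<exists>n. x \<in> A n")
  case True
  have "x \<in> A (LEAST n. x \<in> A n)" using True by (rule LeastI_ex)
  hence "N < (LEAST n. x \<in> A n)" using assms by (meson not_le)
  then show ?thesis using True unfolding HH_def by (simp add: divide_simps)
next
  case False then show ?thesis unfolding HH_def by simp
qed

lemma HH_continuous:
  assumes "\<And>n. openin X (A n)" "\<And>n. closedin X (A n)"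
  shows "continuous_map X euclideanreal (HH A)"
  unfolding continuous_map_upper_lower_semicontinuous_lt
proof (intro conjI allI)
  fix a :: real
  show "openin X {x \<in> topspace X. HH A x > a}"
  proof (cases "a < 0")
    case True
    then have "{x \<in> topspace X. HH A x > a} = topspace X"
      using HH_nonneg[of A] by (auto intro: less_le_trans)
    then show ?thesis by simp
  next
    case False
    have "{x \<in> topspace X. HH A x > a} = (\<Union>n\<in>{n. a < 1 / real (Suc n)}. A n)"
    proof
      show "{x \<in> topspace X. HH A x > a} \<subseteq> (\<Union>n\<in>{n. a < 1 / real (Suc n)}. A n)"
        using HH_gt_witness[of a A] False by fastforce
      show "(\<Union>n\<in>{n. a < 1 / real (Suc n)}. A n) \<subseteq> {x \<in> topspace X. HH A x > a}"
        using HH_ge[of _ A] assms(1) openin_subset by fastforce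
    qed
    then show ?thesis using assms(1) by auto
  qed
next
  fix a :: real
  show "openin X {x \<in> topspace X. HH A x < a}"
  proof (cases "a \<le> 0")
    case True
    then have "{x \<in> topspace X. HH A x < a} = {}"
      using HH_nonneg[of A] by (auto dest: le_less_trans)
    then show ?thesis by (metis openin_empty)
  next
    case False
    define N where "N = nat \<lceil>1 / a\<rceil>"
    have fin: "finite {n. n \<le> N \<and> a \<le> 1 / real (Suc n)}" by simp
    have sub: "{n. a \<le> 1 / real (Suc n)} \<subseteq> {n. n \<le> N \<and> a \<le> 1 / real (Suc n)}"
    proof (intro subsetI)
      fix n assume "n \<in> {n. a \<le> 1 / real (Suc n)}"
      hence h: "a \<le> 1 / real (Suc n)" by simp
      have "real (Suc n) * a \<le> 1" using h False by (simp add: field_simps)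
      hence "real (Suc n) \<le> 1 / a" using False by (simp add: field_simps)
      hence "real n \<le> 1 / a" by simp
      then show "n \<in> {n. n \<le> N \<and> a \<le> 1 / real (Suc n)}" using h unfolding N_def by (simp; linarith)
    qed
    have eq: "{x \<in> topspace X. HH A x < a} =
          topspace X - (\<Union>n\<in>{n. n \<le> N \<and> a \<le> 1 / real (Suc n)}. A n)"
    proof
      show "{x \<in> topspace X. HH A x < a} \<subseteq> topspace X - (\<Union>n\<in>{n. n \<le> N \<and> a \<le> 1 / real (Suc n)}. A n)"
        using HH_ge[of _ A] by fastforce
      show "topspace X - (\<Union>n\<in>{n. n \<le> N \<and> a \<le> 1 / real (Suc n)}. A n) \<subseteq> {x \<in> topspace X. HH A x < a}"
      proof clarify
        fix x assume x: "x \<in> topspace X" and nx: "x \<notin> (\<Union>n\<in>{n. n \<le> N \<and> a \<le> 1 / real (Suc n)}. A n)"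
        show "HH A x < a"
        proof (rule ccontr)
          assume "\<not> HH A x < a"
          then obtain n where "x \<in> A n" "a \<le> 1 / real (Suc n)" using HH_pos_witness[of a A x] False by force
          then show False using nx sub by blast
        qed
      qed
    qed
    have "closedin X (\<Union>n\<in>{n. n \<le> N \<and> a \<le> 1 / real (Suc n)}. A n)"
      using fin assms(2) by (intro closedin_Union) auto
    then show ?thesis unfolding eq by (rule openin_diff[OF openin_topspace])
  qed
qed


lemma QNL:
  assumes qn: "QN_space X"
    and op: "\<And>m n. openin X (D m n)" and cl: "\<And>m n. closedin X (D m n)"
    and ev: "\<And>x n. x \<in> topspace X \<Longrightarrow> \<forall>\<^sub>F m in sequentially. x \<notin> D m n"
  shows "\<exists>\<epsilon>. (\<forall>m. \<epsilon> m > 0) \<and> \<epsilon> \<longlonglongrightarrow> 0 \<and>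
     (\<forall>x\<in>topspace X. \<forall>\<^sub>F m in sequentially. \<forall>n. real (Suc n) * \<epsilon> m \<le> 1 \<longrightarrow> x \<notin> D m n)"
proof -
  define h where "h m = HH (D m)" for m
  have cont: "\<forall>m. continuous_map X euclideanreal (h m)"
    unfolding h_def using op cl by (simp add: HH_continuous)
  have pw: "pointwise_to_zero X h"
    unfolding pointwise_to_zero_def
  proof
    fix x assume x: "x \<in> topspace X"
    show "(\<lambda>m. h m x) \<longlonglongrightarrow> 0"
      unfolding tendsto_iff
    proof (intro allI impI)
      fix r :: real assume r: "r > 0"
      from reals_Archimedean[OF r] obtain N where N0: "inverse (real (Suc N)) < r" ..
      hence N: "1 / real (Suc N) < r" by (simp add: inverse_eq_divide)
      have "\<forall>\<^sub>F m in sequentially. \<forall>i\<in>{..N}. x \<notin> D m i"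
        using ev[OF x] by (intro eventually_ball_finite[OF finite_atMost]) blast
      then show "\<forall>\<^sub>F m in sequentially. dist (h m x) 0 < r"
      proof (rule eventually_mono)
        fix m assume "\<forall>i\<in>{..N}. x \<notin> D m i"
        hence "h m x \<le> 1 / real (Suc (Suc N))" unfolding h_def by (intro HH_small) auto
        also have "\<dots> \<le> 1 / real (Suc N)" by (rule divide_left_mono) auto
        finally have "h m x < r" using N by linarith
        moreover have "0 \<le> h m x" unfolding h_def by (rule HH_nonneg)
        ultimately show "dist (h m x) 0 < r" by (simp add: dist_real_def)
      qed
    qed
  qed
  obtain \<epsilon> where epos: "\<forall>n. \<epsilon> n > 0" and elim: "\<epsilon> \<longlonglongrightarrow> 0"
    and eqn: "\<forall>x\<in>topspace X. \<forall>\<^sub>F n in sequentially. \<bar>h n x\<bar> < \<epsilon> n"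
    using qn[unfolded QN_space_def, rule_format, OF conjI[OF cont pw]] unfolding qn_converges_def by blast
  show ?thesis
  proof (intro exI conjI ballI)
    show "\<forall>m. \<epsilon> m > 0" by (rule epos)
    show "\<epsilon> \<longlonglongrightarrow> 0" by (rule elim)
    fix x assume x: "x \<in> topspace X"
    show "\<forall>\<^sub>F m in sequentially. \<forall>n. real (Suc n) * \<epsilon> m \<le> 1 \<longrightarrow> x \<notin> D m n"
      using eqn[rule_format, OF x]
    proof (rule eventually_mono)
      fix m assume lt: "\<bar>h m x\<bar> < \<epsilon> m"
      show "\<forall>n. real (Suc n) * \<epsilon> m \<le> 1 \<longrightarrow> x \<notin> D m n"
      proof (intro allI impI notI)
        fix n assume le: "real (Suc n) * \<epsilon> m \<le> 1" and xin: "x \<in> D m n"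
        have "1 / real (Suc n) \<le> h m x" unfolding h_def using xin by (rule HH_ge)
        moreover have "\<epsilon> m \<le> 1 / real (Suc n)" using le by (simp add: field_simps)
        ultimately show False using lt by linarith
      qed
    qed
  qed
qed


lemma L1:
  fixes Opn :: "nat \<Rightarrow> 'a set" and X :: "'a topology"
  assumes hyp: "\<forall>U. openin X U \<longrightarrow>
             (\<exists>\<C>. countable \<C> \<and> (\<forall>C\<in>\<C>. openin X C \<and> closedin X C) \<and> U = \<Union>\<C>)"
    and qn: "QN_space X" and op: "\<And>p. openin X (Opn p)"
  shows "\<exists>Z. (\<forall>p. openin X (Z p) \<and> closedin X (Z p) \<and> Z p \<subseteq> Opn p) \<and>
             (\<forall>x\<in>topspace X. \<exists>M. \<forall>p\<ge>M. x \<in> Opn p \<longrightarrow> x \<in> Z p)"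
proof -
  have "\<forall>p. \<exists>\<C>. countable \<C> \<and> (\<forall>C\<in>\<C>. openin X C \<and> closedin X C) \<and> Opn p = \<Union>\<C>"
    using hyp op by blast
  then obtain CC where CC: "\<And>p. countable (CC p)" "\<And>p. \<forall>C\<in>CC p. openin X C \<and> closedin X C"
     "\<And>p. Opn p = \<Union>(CC p)"
    by metis
  define C where "C p j = from_nat_into (insert {} (CC p)) j" for p j
  have Cin: "C p j \<in> insert {} (CC p)" for p j
    unfolding C_def by (rule from_nat_into) simp
  have Cop: "openin X (C p j)" and Ccl: "closedin X (C p j)" for p j
    using Cin[of p j] CC(2)[of p] by auto
  have Crange: "range (C p) = insert {} (CC p)" for p
    unfolding C_def using CC(1)[of p] by (intro range_from_nat_into) auto
  have Cun: "(\<Union>j. C p j) = Opn p" for p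
    using Crange[of p] CC(3)[of p] by (metis Union_insert sup_bot_left)
  define D where "D p j = C p j - (\<Union>i<j. C p i)" for p j
  have Dop: "openin X (D p j)" and Dcl: "closedin X (D p j)" for p j
    unfolding D_def
    by (auto intro!: openin_diff closedin_diff closedin_Union openin_Union Cop Ccl)
  have DC: "D p j \<subseteq> C p j" for p j unfolding D_def by blast
  have Dcover: "\<exists>j. x \<in> D p j" if "x \<in> Opn p" for x p
  proof -
    have ex: "\<exists>j. x \<in> C p j" using that Cun[of p] by blast
    let ?j = "LEAST j. x \<in> C p j"
    have "x \<in> C p ?j" using ex by (rule LeastI_ex)
    moreover have "\<forall>i<?j. x \<notin> C p i" using not_less_Least by blast
    ultimately have "x \<in> D p ?j" unfolding D_def by blast
    then show ?thesis ..
  qed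
  have Ddisj: "j = j'" if "x \<in> D p j" "x \<in> D p j'" for x p j j'
  proof (rule ccontr)
    assume "j \<noteq> j'"
    then consider "j < j'" | "j' < j" by linarith
    then show False
    proof cases
      case 1 then show False using that DC unfolding D_def by blast
    next
      case 2 then show False using that DC unfolding D_def by blast
    qed
  qed
  have evD: "\<forall>\<^sub>F j in sequentially. x \<notin> D p j" if "x \<in> topspace X" for x p
  proof (cases "\<exists>j0. x \<in> D p j0")
    case True
    then obtain j0 where j0: "x \<in> D p j0" by blast
    show ?thesis
    proof (rule eventually_sequentiallyI[of "Suc j0"])
      fix j assume "Suc j0 \<le> j"
      then show "x \<notin> D p j" using Ddisj[OF j0] by fastforce
    qed
  next
    case False then show ?thesis by simp
  qed
  obtain \<epsilon> where epos: "\<forall>m. \<epsilon> m > 0" and elim: "\<epsilon> \<longlonglongrightarrow> 0"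
    and eprop: "\<forall>x\<in>topspace X. \<forall>\<^sub>F j in sequentially. \<forall>p. real (Suc p) * \<epsilon> j \<le> 1 \<longrightarrow> x \<notin> D p j"
    using QNL[of X "\<lambda>j p. D p j", OF qn Dop Dcl evD] by blast
  have bex: "\<exists>N. p \<le> N \<and> (\<forall>j\<ge>N. real (Suc p) * \<epsilon> j \<le> 1)" for p
  proof -
    have "0 < 1 / real (Suc p)" by simp
    then have "\<forall>\<^sub>F j in sequentially. \<epsilon> j < 1 / real (Suc p)"
      using elim by (rule order_tendstoD(2)[rotated])
    then obtain N where N: "\<forall>j\<ge>N. \<epsilon> j < 1 / real (Suc p)"
      unfolding eventually_sequentially by blast
    show ?thesis
    proof (intro exI conjI allI impI)
      show "p \<le> max N p" by simp
      fix j assume "max N p \<le> j"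
      then have "\<epsilon> j < 1 / real (Suc p)" using N by simp
      then show "real (Suc p) * \<epsilon> j \<le> 1" by (simp add: field_simps)
    qed
  qed
  define b where "b p = (SOME N. p \<le> N \<and> (\<forall>j\<ge>N. real (Suc p) * \<epsilon> j \<le> 1))" for p
  have bprop: "p \<le> b p" "\<And>j. b p \<le> j \<Longrightarrow> real (Suc p) * \<epsilon> j \<le> 1" for p
    using someI_ex[OF bex[of p]] unfolding b_def by blast+
  define Z where "Z p = (\<Union>j<b p. D p j)" for p
  show ?thesis
  proof (rule exI[of _ Z], intro conjI allI ballI)
    fix p
    show "openin X (Z p)" unfolding Z_def by (auto intro!: openin_Union Dop)
    show "closedin X (Z p)" unfolding Z_def by (auto intro!: closedin_Union Dcl)
    show "Z p \<subseteq> Opn p" unfolding Z_def using DC Cun by blast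
  next
    fix x assume x: "x \<in> topspace X"
    obtain M where M: "\<forall>j\<ge>M. \<forall>p. real (Suc p) * \<epsilon> j \<le> 1 \<longrightarrow> x \<notin> D p j"
      using eprop[rule_format, OF x] unfolding eventually_sequentially by blast
    show "\<exists>M. \<forall>p\<ge>M. x \<in> Opn p \<longrightarrow> x \<in> Z p"
    proof (intro exI allI impI)
      fix p assume pM: "M \<le> p" and xO: "x \<in> Opn p"
      obtain j where j: "x \<in> D p j" using Dcover[OF xO] by blast
      show "x \<in> Z p"
      proof (cases "j < b p")
        case True then show ?thesis unfolding Z_def using j by blast
      next
        case False
        then have "b p \<le> j" by simp
        then have "real (Suc p) * \<epsilon> j \<le> 1" "M \<le> j" using bprop[of p] pM by auto
        then show ?thesis using M j by blast
      qed
    qed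
  qed
qed


lemma aux_k:
  fixes d :: real
  assumes "0 < d" "d \<le> 1/2"
  shows "\<exists>k. real (Suc k) * d \<le> 1 \<and> 1 < real (Suc k) * (2 * d)"
proof -
  define m where "m = nat \<lfloor>1 / d\<rfloor>"
  have ge2: "2 \<le> 1 / d" using assms by (simp add: field_simps)
  have m1: "real m \<le> 1 / d" and m2: "1 / d < real m + 1" and m3: "2 \<le> m"
    unfolding m_def using ge2 by linarith+
  have "real m * d \<le> 1" using m1 assms(1) by (simp add: field_simps)
  moreover have "1 < real m * (2 * d)"
  proof -
    have "1 / d - 1 < real m" using m2 by linarith
    hence "(1 / d - 1) * (2 * d) < real m * (2 * d)" using assms(1) by (intro mult_strict_right_mono) auto
    moreover have "(1 / d - 1) * (2 * d) = 2 - 2 * d" using assms(1) by (simp add: field_simps)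
    ultimately show ?thesis using assms(2) by linarith
  qed
  moreover have "Suc (m - 1) = m" using m3 by simp
  ultimately show ?thesis by (metis)
qed

theorem mainTheorem12:
  fixes X :: "'a topology"
  assumes "\<forall>U. openin X U \<longrightarrow>
             (\<exists>\<C>. countable \<C> \<and> (\<forall>C\<in>\<C>. openin X C \<and> closedin X C) \<and> U = \<Union>\<C>)"
    and "QN_space X"
  shows "wQN_star_space X"
  unfolding wQN_star_space_def
proof (intro allI impI)
  fix f :: "nat \<Rightarrow> 'a \<Rightarrow> real"
  assume fh: "(\<forall>n. lower_semicontinuous_on X (f n)) \<and> pointwise_to_zero X f"
  then have lsc: "\<And>n a. openin X {x \<in> topspace X. a < f n x}"
    and pw: "\<And>x. x \<in> topspace X \<Longrightarrow> (\<lambda>n. f n x) \<longlonglongrightarrow> 0"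
    unfolding lower_semicontinuous_on_def pointwise_to_zero_def by auto
  define pc where "pc n k s = prod_encode (n, prod_encode (k, s))" for n k s :: nat
  define Opn where "Opn p = (case prod_decode p of (n, q) \<Rightarrow> (case prod_decode q of (k, s) \<Rightarrow>
      if s = 0 then {x \<in> topspace X. - (1 / real (Suc k)) < f n x}
      else {x \<in> topspace X. 1 / real (Suc k) < f n x}))" for p
  have Opc0: "Opn (pc n k 0) = {x \<in> topspace X. - (1 / real (Suc k)) < f n x}" for n k
    by (simp add: Opn_def pc_def)
  have Opc1: "Opn (pc n k 1) = {x \<in> topspace X. 1 / real (Suc k) < f n x}" for n k
    by (simp add: Opn_def pc_def)
  have Oop: "openin X (Opn p)" for p
    by (simp add: Opn_def lsc split: prod.split)
  from L1[OF assms(1) assms(2) Oop] obtain Z where ZZ: "(\<forall>p. openin X (Z p) \<and> closedin X (Z p) \<and> Z p \<subseteq> Opn p) \<and>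
    (\<forall>x\<in>topspace X. \<exists>M. \<forall>p\<ge>M. x \<in> Opn p \<longrightarrow> x \<in> Z p)" ..
  have Z: "\<forall>p. openin X (Z p) \<and> closedin X (Z p) \<and> Z p \<subseteq> Opn p" using ZZ by (rule conjunct1)
  have ZM: "\<forall>x\<in>topspace X. \<exists>M. \<forall>p\<ge>M. x \<in> Opn p \<longrightarrow> x \<in> Z p" using ZZ by (rule conjunct2)
  have pcge: "n \<le> pc n k s" for n k s by (simp add: pc_def le_prod_encode_1)
  define E where "E n k = (topspace X - Z (pc n k 0)) \<union> Z (pc n k 1)" for n k
  have Eop: "openin X (E n k)" for n k
    unfolding E_def using Z by (intro openin_Un openin_diff) auto
  have Ecl: "closedin X (E n k)" for n k
    unfolding E_def using Z by (intro closedin_Un closedin_diff) auto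
  have evE: "\<forall>\<^sub>F n in sequentially. x \<notin> E n k" if x: "x \<in> topspace X" for x k
  proof -
    obtain M where M: "\<forall>p\<ge>M. x \<in> Opn p \<longrightarrow> x \<in> Z p" using ZM x by blast
    have "\<forall>\<^sub>F n in sequentially. dist (f n x) 0 < 1 / real (Suc k)"
      using pw[OF x] unfolding tendsto_iff by simp
    moreover have "\<forall>\<^sub>F n in sequentially. M \<le> n" by (rule eventually_ge_at_top)
    ultimately show ?thesis
    proof eventually_elim
      case (elim n)
      then have a: "\<bar>f n x\<bar> < 1 / real (Suc k)" by (simp add: dist_real_def)
      have "x \<in> Opn (pc n k 0)" using a x unfolding Opc0 by auto
      then have "x \<in> Z (pc n k 0)" using M elim pcge[of n k 0] by auto
      moreover have "x \<notin> Z (pc n k 1)"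
      proof
        assume "x \<in> Z (pc n k 1)"
        then have "x \<in> Opn (pc n k 1)" using Z by blast
        then show False using a unfolding Opc1 by auto
      qed
      ultimately show ?case unfolding E_def by blast
    qed
  qed
  obtain \<delta> where dpos: "\<forall>m. \<delta> m > 0" and dlim: "\<delta> \<longlonglongrightarrow> 0"
    and dprop: "\<forall>x\<in>topspace X. \<forall>\<^sub>F n in sequentially. \<forall>k. real (Suc k) * \<delta> n \<le> 1 \<longrightarrow> x \<notin> E n k"
    using QNL[of X E, OF assms(2) Eop Ecl evE] by blast
  have "qn_converges X f"
    unfolding qn_converges_def
  proof (rule exI[of _ "\<lambda>n. 2 * \<delta> n"], intro conjI allI ballI)
    fix n show "0 < 2 * \<delta> n" using dpos by simp
  next
    show "(\<lambda>n. 2 * \<delta> n) \<longlonglongrightarrow> 0" using tendsto_mult[OF tendsto_const dlim, of 2] by simp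
  next
    fix x assume x: "x \<in> topspace X"
    obtain M where M: "\<forall>p\<ge>M. x \<in> Opn p \<longrightarrow> x \<in> Z p" using ZM x by blast
    have "\<forall>\<^sub>F n in sequentially. \<delta> n < 1/2"
      using dlim by (rule order_tendstoD(2)) simp
    moreover have "\<forall>\<^sub>F n in sequentially. M \<le> n" by (rule eventually_ge_at_top)
    moreover note dprop[rule_format, OF x]
    ultimately show "\<forall>\<^sub>F n in sequentially. \<bar>f n x\<bar> < 2 * \<delta> n"
    proof eventually_elim
      case (elim n)
      obtain k where k1: "real (Suc k) * \<delta> n \<le> 1" and k2: "1 < real (Suc k) * (2 * \<delta> n)"
        using aux_k[of "\<delta> n"] dpos elim(1) by auto
      have nE: "x \<notin> E n k" using elim(3) k1 by blast
      have "x \<in> Z (pc n k 0)" using nE x unfolding E_def by blast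
      then have "x \<in> Opn (pc n k 0)" using Z by blast
      then have lo: "- (1 / real (Suc k)) < f n x" unfolding Opc0 by auto
      have hi: "f n x \<le> 1 / real (Suc k)"
      proof (rule ccontr)
        assume "\<not> f n x \<le> 1 / real (Suc k)"
        then have "x \<in> Opn (pc n k 1)" using x unfolding Opc1 by auto
        then have "x \<in> Z (pc n k 1)" using M elim(2) pcge[of n k 1] by auto
        then show False using nE unfolding E_def by blast
      qed
      have "1 / real (Suc k) < 2 * \<delta> n" using k2 by (simp add: field_simps)
      then show ?case using lo hi by linarith
    qed
  qed
  then show "\<exists>s. strict_mono s \<and> qn_converges X (\<lambda>n. f (s n))"
    by (intro exI[of _ id]) (simp add: strict_mono_def)
qed

end
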